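(* Let $n>p>1$ with $p\in(1,2]$, let $f,k$ be $C^1$ functions satisfying: (F) $f(u)=u|u|^{q-2}b(u)$ with $q>2$, $b\in C^1(\mathbb R)$, $b>0$ on $(-d^-,d^+)$ for some $d^\pm>0$, $b(-d^-)=b(d^+)=0$; (K) $k(r)=h(r)r^\delta>0$ on $(0,\infty)$ with $h>0$, $\delta>-p$, $\lim_{r\to0}h(r)\in(0,\infty)$, $\lim_{r\to\infty}h(r)\in(0,\infty)$, $\limsup_{r\to0}h'(r)r<+\infty$, $\lim_{r\to\infty}h'(r)r^{1+\varpi}=0$ for some $\varpi>0$. Let $l:=p\frac{q+\delta}{p+\delta}>\frac{np}{n-p}$, $\alpha_l=\frac{p}{l-p}$, $\beta_l=(\alpha_l+1)(p-1)$, $\gamma_l=\beta_l-(n-1)$. Let $\bar f$ be a $C^1$ function with $\bar f=f$ on $(-d^-,d^+)$, $\bar f=0$ on $(-\infty,-d^--1)\cup(d^++1,+\infty)$, and $u\bar f(u)\le0$ elsewhere, and set $g_l(x,t)=k(e^t)\bar f(xe^{-\alpha_lt})e^{\alpha_l(l-1)t}$. Consider the system $$\dot x_l=\alpha_lx_l+y_l|y_l|^{\frac{2-p}{p-1}},\qquad \dot y_l=\gamma_ly_l-g_l(x_l,t),$$ and denote by $(x_l(t,\sigma,\mathbf Q),y_l(t,\sigma,\mathbf Q))$ its solution taking the value $\mathbf Q$ at $t=\sigma$. Let $\mathbf Q=(Q_x,Q_y)\in\mathbb R^2$ and $\sigma\in\mathbb R$ with $-d^-<Q_xe^{-\alpha_l\sigma}<d^+$.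 Suppose there exists $\sigma'>\sigma$ such that $-d^-<x_l(\sigma',\sigma,\mathbf Q)e^{-\alpha_l\sigma'}<d^+$. Then $-d^-<x_l(t,\sigma,\mathbf Q)e^{-\alpha_lt}<d^+$ for every $t\in(\sigma,\sigma')$. *)

theory Defs
  imports "HOL-Analysis.Analysis"
begin

definition C1_on :: "real set \<Rightarrow> (real \<Rightarrow> real) \<Rightarrow> bool" where
  "C1_on S f \<longleftrightarrow> (\<exists>f'. (\<forall>x\<in>S. (f has_real_derivative f' x) (at x)) \<and> continuous_on S f')"

end

theory Submission
  imports Defs
begin


lemma phi_props:
  fixes v a :: real assumes "a \<ge> 0"
  shows "v * \<bar>v\<bar> powr a = 0 \<longleftrightarrow> v = 0"
    and "v \<ge> 0 \<Longrightarrow> v * \<bar>v\<bar> powr a \<ge> 0"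
    and "\<bar>v\<bar> \<le> 1 \<Longrightarrow> \<bar>v * \<bar>v\<bar> powr a\<bar> \<le> \<bar>v\<bar>"
proof -
  show "v * \<bar>v\<bar> powr a = 0 \<longleftrightarrow> v = 0" by auto
  show "v \<ge> 0 \<Longrightarrow> v * \<bar>v\<bar> powr a \<ge> 0" by simp
  assume h: "\<bar>v\<bar> \<le> 1"
  have "\<bar>v\<bar> powr a \<le> 1"
    using h assms by (intro powr_le1) auto
  then have "\<bar>v\<bar> * \<bar>v\<bar> powr a \<le> \<bar>v\<bar> * 1" by (intro mult_left_mono) auto
  then show "\<bar>v * \<bar>v\<bar> powr a\<bar> \<le> \<bar>v\<bar>" by (simp add: abs_mult)
qed

lemma cont_nbhd:
  fixes f :: "real \<Rightarrow> real"
  assumes "isCont f x" "r > 0"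
  shows "\<exists>e>0. \<forall>t. \<bar>t - x\<bar> < e \<longrightarrow> \<bar>f t - f x\<bar> < r"
proof -
  obtain e where e: "e > 0" "\<And>t. t \<noteq> x \<Longrightarrow> norm (t - x) < e \<Longrightarrow> norm (f t - f x) < r"
    using assms unfolding isCont_def LIM_eq by blast
  show ?thesis
  proof (intro exI[of _ e] conjI allI impI)
    fix t assume "\<bar>t - x\<bar> < e"
    thus "\<bar>f t - f x\<bar> < r" using e(2)[of t] assms(2) by (cases "t = x") auto
  qed (use e in auto)
qed

lemma C1_isCont: "C1_on UNIV F \<Longrightarrow> isCont F x"
  unfolding C1_on_def by (meson DERIV_isCont UNIV_I)

lemma C1_lip:
  assumes "C1_on UNIV F"
  shows "\<exists>Lf\<ge>0. \<forall>v. \<bar>v - z\<bar> \<le> 1 \<longrightarrow> \<bar>F v - F z\<bar> \<le> Lf * \<bar>v - z\<bar>"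
proof -
  obtain F' where d: "\<And>x. (F has_real_derivative F' x) (at x)" and c: "continuous_on UNIV F'"
    using assms unfolding C1_on_def by blast
  have cc: "continuous_on {z-1..z+1} (\<lambda>v. \<bar>F' v\<bar>)"
    by (intro continuous_intros continuous_on_subset[OF c]) auto
  obtain vm where vm: "\<forall>v\<in>{z-1..z+1}. \<bar>F' v\<bar> \<le> \<bar>F' vm\<bar>"
    using continuous_attains_sup[OF compact_Icc _ cc] by force
  have "\<bar>F v - F z\<bar> \<le> \<bar>F' vm\<bar> * \<bar>v - z\<bar>" if "\<bar>v - z\<bar> \<le> 1" for v
  proof -
    have "norm (F v - F z) \<le> \<bar>F' vm\<bar> * norm (v - z)"
    proof (rule field_differentiable_bound[of "{z-1..z+1}" F F'])
      show "convex {z - 1..z + 1}" by simp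
      show "\<And>w. w \<in> {z-1..z+1} \<Longrightarrow> (F has_field_derivative F' w) (at w within {z-1..z+1})"
        using d has_field_derivative_at_within by blast
      show "\<And>w. w \<in> {z-1..z+1} \<Longrightarrow> norm (F' w) \<le> \<bar>F' vm\<bar>" using vm by simp
      show "v \<in> {z-1..z+1}" "z \<in> {z-1..z+1}" using that by auto
    qed
    thus ?thesis by simp
  qed
  thus ?thesis by (intro exI[of _ "\<bar>F' vm\<bar>"]) auto
qed

lemma core:
  fixes u y P G :: "real \<Rightarrow> real" and a \<gamma> c A L \<delta> s s' :: real
  assumes ss: "s < s'" and a0: "a \<ge> 0"
    and cu: "continuous_on {s..s'} u" and cy: "continuous_on {s..s'} y"
    and du: "\<And>t. s<t \<Longrightarrow> t<s' \<Longrightarrow> (u has_real_derivative P t * (y t * \<bar>y t\<bar> powr a)) (at t)"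
    and dy: "\<And>t. s<t \<Longrightarrow> t<s' \<Longrightarrow> (y has_real_derivative \<gamma> * y t - G t) (at t)"
    and Ppos: "\<And>t. s<t \<Longrightarrow> t<s' \<Longrightarrow> P t > 0" and PA: "\<And>t. s<t \<Longrightarrow> t<s' \<Longrightarrow> P t \<le> A"
    and H1: "\<And>t. s<t \<Longrightarrow> t<s' \<Longrightarrow> c \<le> u t \<Longrightarrow> G t \<le> 0"
    and d0: "\<delta> > 0"
    and H2: "\<And>t. s<t \<Longrightarrow> t<s' \<Longrightarrow> c - \<delta> \<le> u t \<Longrightarrow> u t \<le> c \<Longrightarrow> \<bar>G t\<bar> \<le> L * (c - u t)"
    and us: "u s < c" and us': "u s' < c"
  shows "\<forall>t\<in>{s..s'}. u t < c"
proof (rule ccontr)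
  assume "\<not> ?thesis"
  then obtain t0 where t0: "t0 \<in> {s..s'}" "u t0 \<ge> c" by force
  obtain tm where tm: "tm \<in> {s..s'}" "\<forall>t\<in>{s..s'}. u t \<le> u tm"
    using continuous_attains_sup[OF compact_Icc _ cu] ss by auto
  define M where "M = u tm"
  have Mc: "M \<ge> c" using tm t0 M_def by force
  define T where "T = {t\<in>{s..s'}. u t = M}"
  have clT: "closed T" unfolding T_def by (rule continuous_closed_preimage_constant[OF cu]) auto
  have neT: "T \<noteq> {}" using tm M_def T_def by auto
  have bT: "bdd_above T" unfolding T_def by (rule bdd_aboveI[of _ s']) auto
  define \<tau> where "\<tau> = Sup T"
  have tauT: "\<tau> \<in> T" unfolding \<tau>_def by (rule closed_contains_Sup[OF neT bT clT])
  have last: "u t < M" if "\<tau> < t" "t \<le> s'" for t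
  proof -
    have "t \<in> {s..s'}" using that tauT T_def by auto
    hence "u t \<le> M" using tm M_def by auto
    moreover have "u t \<noteq> M"
    proof
      assume "u t = M"
      hence "t \<in> T" using \<open>t \<in> {s..s'}\<close> T_def by auto
      hence "t \<le> \<tau>" unfolding \<tau>_def using bT by (rule cSup_upper)
      thus False using that by simp
    qed
    ultimately show ?thesis by simp
  qed
  have utau: "u \<tau> = M" using tauT T_def by auto
  have taus: "s < \<tau>" using tauT T_def utau us Mc by (cases "\<tau> = s") auto
  have taus': "\<tau> < s'" using tauT T_def utau us' Mc by (cases "\<tau> = s'") auto
  have umax: "u t \<le> M" if "t \<in> {s..s'}" for t using tm that M_def by auto
  have "P \<tau> * (y \<tau> * \<bar>y \<tau>\<bar> powr a) = 0"
  proof (rule DERIV_local_max[OF du[OF taus taus'], of "min (\<tau> - s) (s' - \<tau>)"])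
    show "0 < min (\<tau> - s) (s' - \<tau>)" using taus taus' by simp
    show "\<forall>y. \<bar>\<tau> - y\<bar> < min (\<tau> - s) (s' - \<tau>) \<longrightarrow> u y \<le> u \<tau>"
    proof (intro allI impI)
      fix r assume "\<bar>\<tau> - r\<bar> < min (\<tau> - s) (s' - \<tau>)"
      hence "r \<in> {s..s'}" by auto
      thus "u r \<le> u \<tau>" using umax utau by auto
    qed
  qed
  hence y0: "y \<tau> = 0" using Ppos[OF taus taus'] phi_props(1)[OF a0] by simp
  define t1 where "t1 = (\<tau> + s') / 2"
  have cu': "continuous_on {\<tau>..r} u" if "r \<le> s'" for r
    by (rule continuous_on_subset[OF cu]) (use that taus in auto)
  have cy': "continuous_on {\<tau>..r} y" if "r \<le> s'" for r
    by (rule continuous_on_subset[OF cy]) (use that taus in auto)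
  show False
  proof (cases "M > c")
    case True
    have "isCont u \<tau>" using du[OF taus taus'] by (rule DERIV_isCont)
    then obtain e where e: "e > 0" "\<And>t. \<bar>t - \<tau>\<bar> < e \<Longrightarrow> \<bar>u t - u \<tau>\<bar> < M - c"
      using cont_nbhd[where f=u and x=\<tau> and r="M - c"] True by auto
    define t2 where "t2 = min (\<tau> + e/2) t1"
    have t2: "\<tau> < t2" "t2 < s'" using e taus' unfolding t2_def t1_def by (auto simp: min_def field_simps)
    have ugt: "u t > c" if "\<tau> \<le> t" "t \<le> t2" for t
      using e(2)[of t] that utau e(1) unfolding t2_def by auto
    define z where "z t = y t * exp (- \<gamma> * t)" for t
    have zge: "y t \<ge> 0" if "\<tau> < t" "t < t2" for t
    proof -
      have "z \<tau> \<le> z t"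
      proof (rule DERIV_nonneg_imp_increasing_open[where f=z])
        show "\<tau> \<le> t" using that by simp
        show "continuous_on {\<tau>..t} z" unfolding z_def
          by (intro continuous_intros cy') (use that t2 in auto)
        fix r assume r: "\<tau> < r" "r < t"
        have dyr: "(y has_real_derivative \<gamma> * y r - G r) (at r)"
          by (rule dy) (use r that t2 taus in linarith)+
        have d: "(z has_real_derivative (\<gamma> * y r - G r) * exp (- \<gamma> * r) + y r * (exp (- \<gamma> * r) * (- \<gamma>))) (at r)"
          unfolding z_def by (auto intro!: derivative_eq_intros dyr)
        have "G r \<le> 0" using H1 ugt r that t2 taus by (meson less_eq_real_def order.strict_trans)
        hence "(\<gamma> * y r - G r) * exp (- \<gamma> * r) + y r * (exp (- \<gamma> * r) * (- \<gamma>)) = - G r * exp (- \<gamma> * r)"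
          by (simp add: algebra_simps)
        also have "\<dots> \<ge> 0" using \<open>G r \<le> 0\<close> by (simp add: mult_nonpos_nonneg)
        finally show "\<exists>y. (z has_real_derivative y) (at r) \<and> 0 \<le> y" using d by auto
      qed
      thus ?thesis using y0 unfolding z_def by (simp add: zero_le_mult_iff)
    qed
    have "u \<tau> \<le> u t2"
    proof (rule DERIV_nonneg_imp_increasing_open[where f=u])
      show "\<tau> \<le> t2" using t2 by simp
      show "continuous_on {\<tau>..t2} u" using cu' t2 by simp
      fix r assume r: "\<tau> < r" "r < t2"
      have "P r * (y r * \<bar>y r\<bar> powr a) \<ge> 0"
        using Ppos[of r] phi_props(2)[OF a0 zge[OF r]] r t2 taus by simp
      thus "\<exists>y. (u has_real_derivative y) (at r) \<and> 0 \<le> y" using du[of r] r t2 taus by auto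
    qed
    thus False using last[of t2] t2 utau by simp
  next
    case False
    hence Mc': "M = c" using Mc by simp
    have "isCont u \<tau>" using du[OF taus taus'] by (rule DERIV_isCont)
    then obtain e1 where e1: "e1 > 0" "\<And>t. \<bar>t - \<tau>\<bar> < e1 \<Longrightarrow> \<bar>u t - u \<tau>\<bar> < \<delta>"
      using cont_nbhd[where f=u and x=\<tau> and r=\<delta>] d0 by auto
    have "isCont y \<tau>" using dy[OF taus taus'] by (rule DERIV_isCont)
    then obtain e2 where e2: "e2 > 0" "\<And>t. \<bar>t - \<tau>\<bar> < e2 \<Longrightarrow> \<bar>y t - y \<tau>\<bar> < 1"
      using cont_nbhd[where f=y and x=\<tau> and r=1] by auto
    define t2 where "t2 = min (\<tau> + min e1 e2/2) t1"
    have t2: "\<tau> < t2" "t2 < s'" using e1 e2 taus' unfolding t2_def t1_def by (auto simp: min_def field_simps)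
    have uin: "c - \<delta> \<le> u t" "u t \<le> c" and yin: "\<bar>y t\<bar> \<le> 1" if "\<tau> \<le> t" "t \<le> t2" for t
    proof -
      have "t \<le> \<tau> + min e1 e2 / 2" using that unfolding t2_def by simp
      hence "t - \<tau> < e1" using e1(1) e2(1) by (auto simp: min_def split: if_splits)
      thus "c - \<delta> \<le> u t" using e1(2)[of t] that utau Mc' by auto
      show "u t \<le> c" using umax[of t] that t2 taus Mc' by auto
      have "t \<le> \<tau> + min e1 e2 / 2" using that unfolding t2_def by simp
      hence "t - \<tau> < e2" using e1(1) e2(1) by (auto simp: min_def split: if_splits)
      thus "\<bar>y t\<bar> \<le> 1" using e2(2)[of t] that y0 by auto
    qed
    define C where "C = \<bar>A\<bar> + \<bar>L\<bar> + 2 * \<bar>\<gamma>\<bar>"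
    define E where "E t = (c - u t)^2 + (y t)^2" for t
    define D where "D t = E t * exp (- C * t)" for t
    have "D \<tau> \<ge> D t2"
    proof (rule DERIV_nonpos_imp_decreasing_open[where f=D])
      show "\<tau> \<le> t2" using t2 by simp
      show "continuous_on {\<tau>..t2} D" unfolding D_def E_def
        by (intro continuous_intros cy' cu') (use t2 in auto)
      fix r assume r: "\<tau> < r" "r < t2"
      have rs: "s < r" "r < s'" using r t2 taus by auto
      define w where "w = c - u r"
      define ph where "ph = y r * \<bar>y r\<bar> powr a"
      define E' where "E' = 2 * w * (- (P r * ph)) + 2 * y r * (\<gamma> * y r - G r)"
      have dE: "(E has_real_derivative E') (at r)"
        unfolding E_def E'_def w_def ph_def
        by (auto intro!: derivative_eq_intros du[OF rs] dy[OF rs] simp: algebra_simps)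
      have dD: "(D has_real_derivative E' * exp (- C * r) + E r * (exp (- C * r) * (- C))) (at r)"
        unfolding D_def by (auto intro!: derivative_eq_intros dE)
      have w0: "w \<ge> 0" and wd: "c - \<delta> \<le> u r" using uin[of r] r w_def by auto
      have yr: "\<bar>y r\<bar> \<le> 1" using yin[of r] r by auto
      have Gb: "\<bar>G r\<bar> \<le> \<bar>L\<bar> * w"
      proof -
        have "\<bar>G r\<bar> \<le> L * w" using H2[OF rs wd] uin[of r] r w_def by auto
        also have "\<dots> \<le> \<bar>L\<bar> * w" using w0 by (intro mult_right_mono) auto
        finally show ?thesis .
      qed
      have phb: "\<bar>ph\<bar> \<le> \<bar>y r\<bar>" using phi_props(3)[OF a0 yr] ph_def by simp
      have Pb: "\<bar>P r\<bar> \<le> \<bar>A\<bar>" using Ppos[OF rs] PA[OF rs] by simp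
      have t1: "2 * w * (- (P r * ph)) \<le> 2 * w * (\<bar>A\<bar> * \<bar>y r\<bar>)"
      proof -
        have "- (P r * ph) \<le> \<bar>P r\<bar> * \<bar>ph\<bar>" by (simp add: abs_mult[symmetric])
        also have "\<dots> \<le> \<bar>A\<bar> * \<bar>y r\<bar>" using Pb phb by (intro mult_mono) auto
        finally show ?thesis using w0 by (intro mult_left_mono) auto
      qed
      have t2': "2 * y r * (\<gamma> * y r - G r) \<le> 2 * \<bar>\<gamma>\<bar> * (y r)^2 + 2 * \<bar>y r\<bar> * (\<bar>L\<bar> * w)"
      proof -
        have a1: "\<gamma> * (y r)^2 \<le> \<bar>\<gamma>\<bar> * (y r)^2" by (intro mult_right_mono) auto
        have a2: "- (y r * G r) \<le> \<bar>y r\<bar> * (\<bar>L\<bar> * w)"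
        proof -
          have "- (y r * G r) \<le> \<bar>y r\<bar> * \<bar>G r\<bar>" by (simp add: abs_mult[symmetric])
          also have "\<dots> \<le> \<bar>y r\<bar> * (\<bar>L\<bar> * w)" using Gb by (intro mult_left_mono) auto
          finally show ?thesis .
        qed
        show ?thesis using a1 a2 by (simp add: algebra_simps power2_eq_square)
      qed
      have amgm: "2 * w * \<bar>y r\<bar> \<le> w^2 + (y r)^2"
      proof -
        have "0 \<le> (w - \<bar>y r\<bar>)^2" by simp
        thus ?thesis by (simp add: power2_diff)
      qed
      have "E' \<le> (\<bar>A\<bar> + \<bar>L\<bar>) * (2 * w * \<bar>y r\<bar>) + 2 * \<bar>\<gamma>\<bar> * (y r)^2"
        using t1 t2' unfolding E'_def by (simp add: algebra_simps)
      also have "\<dots> \<le> (\<bar>A\<bar> + \<bar>L\<bar>) * (w^2 + (y r)^2) + 2 * \<bar>\<gamma>\<bar> * (w^2 + (y r)^2)"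
        using amgm by (intro add_mono mult_left_mono) auto
      also have "\<dots> = C * E r" unfolding C_def E_def w_def by (simp add: algebra_simps)
      finally have "E' \<le> C * E r" .
      hence "E' * exp (- C * r) + E r * (exp (- C * r) * (- C)) \<le> 0"
        by (simp add: algebra_simps mult_right_mono)
      thus "\<exists>y. (D has_real_derivative y) (at r) \<and> y \<le> 0" using dD by auto
    qed
    moreover have "D \<tau> = 0" unfolding D_def E_def using utau Mc' y0 by simp
    moreover have "D t2 \<ge> 0" unfolding D_def E_def by simp
    ultimately have "E t2 = 0" unfolding D_def by simp
    hence "u t2 = c" unfolding E_def by (simp add: sum_power2_eq_zero_iff)
    thus False using last[of t2] t2 Mc' by simp
  qed
qed


theorem lemma3p5:
  fixes n :: nat and p q \<delta> w dm dp L0 Linf \<sigma> \<sigma>' Qx Qy :: real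
    and f b fbar k h x y :: "real \<Rightarrow> real"
  defines "l \<equiv> p * (q + \<delta>) / (p + \<delta>)"
  defines "\<alpha> \<equiv> p / (l - p)"
  defines "\<beta> \<equiv> (\<alpha> + 1) * (p - 1)"
  defines "\<gamma> \<equiv> \<beta> - (real n - 1)"
  defines "g \<equiv> (\<lambda>X t. k (exp t) * fbar (X * exp (- \<alpha> * t)) * exp (\<alpha> * (l - 1) * t))"
  assumes hp: "1 < p" "p \<le> 2" "p < real n"
  and hF: "q > 2" "C1_on UNIV b" "dm > 0" "dp > 0"
      "\<And>u. - dm < u \<Longrightarrow> u < dp \<Longrightarrow> b u > 0" "b (- dm) = 0" "b dp = 0"
      "\<And>u. f u = u * \<bar>u\<bar> powr (q - 2) * b u" "C1_on UNIV f"
  and hK: "C1_on {0<..} k" "\<delta> > - p"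
      "\<And>r. r > 0 \<Longrightarrow> k r = h r * r powr \<delta>"
      "\<And>r. r > 0 \<Longrightarrow> k r > 0" "\<And>r. r > 0 \<Longrightarrow> h r > 0"
      "L0 > 0" "(h \<longlongrightarrow> L0) (at_right 0)"
      "Linf > 0" "(h \<longlongrightarrow> Linf) at_top"
      "Limsup (at_right 0) (\<lambda>r. ereal (deriv h r * r)) < \<infinity>"
      "w > 0" "((\<lambda>r. deriv h r * r powr (1 + w)) \<longlongrightarrow> 0) at_top"
  and hl: "l > real n * p / (real n - p)"
  and hfbar: "C1_on UNIV fbar"
      "\<And>u. - dm < u \<Longrightarrow> u < dp \<Longrightarrow> fbar u = f u"
      "\<And>u. u < - dm - 1 \<or> u > dp + 1 \<Longrightarrow> fbar u = 0"
      "\<And>u. u \<le> - dm \<or> u \<ge> dp \<Longrightarrow> u * fbar u \<le> 0"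
  and hsol: "\<sigma> < \<sigma>'"
      "\<And>t. t \<in> {\<sigma>..\<sigma>'} \<Longrightarrow>
         (x has_real_derivative (\<alpha> * x t + y t * \<bar>y t\<bar> powr ((2 - p) / (p - 1))))
           (at t within {\<sigma>..\<sigma>'})"
      "\<And>t. t \<in> {\<sigma>..\<sigma>'} \<Longrightarrow>
         (y has_real_derivative (\<gamma> * y t - g (x t) t)) (at t within {\<sigma>..\<sigma>'})"
      "x \<sigma> = Qx" "y \<sigma> = Qy"
  and hQ: "- dm < Qx * exp (- \<alpha> * \<sigma>)" "Qx * exp (- \<alpha> * \<sigma>) < dp"
  and hend: "- dm < x \<sigma>' * exp (- \<alpha> * \<sigma>')" "x \<sigma>' * exp (- \<alpha> * \<sigma>') < dp"
  shows "\<forall>t\<in>{\<sigma><..<\<sigma>'}. - dm < x t * exp (- \<alpha> * t) \<and> x t * exp (- \<alpha> * t) < dp"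
proof -
  define a where "a = (2 - p) / (p - 1)"
  have a0: "a \<ge> 0" unfolding a_def using hp by simp
  define u where "u t = x t * exp (- \<alpha> * t)" for t
  define G where "G t = g (x t) t" for t
  define K where "K t = k (exp t) * exp (\<alpha> * (l - 1) * t)" for t
  have Gu: "G t = K t * fbar (u t)" for t
    unfolding G_def K_def g_def u_def by simp
  have cx: "continuous_on {\<sigma>..\<sigma>'} x" by (rule DERIV_continuous_on[OF hsol(2)])
  have cy: "continuous_on {\<sigma>..\<sigma>'} y" by (rule DERIV_continuous_on[OF hsol(3)])
  have cu: "continuous_on {\<sigma>..\<sigma>'} u" unfolding u_def by (intro continuous_intros cx)
  have dx: "(x has_real_derivative (\<alpha> * x t + y t * \<bar>y t\<bar> powr a)) (at t)" if "\<sigma> < t" "t < \<sigma>'" for t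
    using hsol(2)[of t] that at_within_Icc_at[OF that] unfolding a_def by auto
  have dy: "(y has_real_derivative (\<gamma> * y t - G t)) (at t)" if "\<sigma> < t" "t < \<sigma>'" for t
    using hsol(3)[of t] that at_within_Icc_at[OF that] unfolding G_def by auto
  have du: "(u has_real_derivative exp (- \<alpha> * t) * (y t * \<bar>y t\<bar> powr a)) (at t)" if "\<sigma> < t" "t < \<sigma>'" for t
  proof -
    have "(u has_real_derivative (\<alpha> * x t + y t * \<bar>y t\<bar> powr a) * exp (- \<alpha> * t) + x t * (exp (- \<alpha> * t) * (- \<alpha>))) (at t)"
      unfolding u_def by (auto intro!: derivative_eq_intros dx[OF that])
    thus ?thesis by (simp add: algebra_simps)
  qed
  define A where "A = exp (\<bar>\<alpha>\<bar> * (\<bar>\<sigma>\<bar> + \<bar>\<sigma>'\<bar>))"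
  have PA: "exp (- \<alpha> * t) \<le> A" if "\<sigma> < t" "t < \<sigma>'" for t
  proof -
    have "- \<alpha> * t \<le> \<bar>\<alpha>\<bar> * \<bar>t\<bar>" by (metis abs_ge_self abs_minus_cancel abs_mult mult_minus_left)
    also have "\<dots> \<le> \<bar>\<alpha>\<bar> * (\<bar>\<sigma>\<bar> + \<bar>\<sigma>'\<bar>)" using that by (intro mult_left_mono) auto
    finally show ?thesis unfolding A_def by simp
  qed
  obtain k' where dk: "\<And>r. r \<in> {0<..} \<Longrightarrow> (k has_real_derivative k' r) (at r)"
    using hK(1) unfolding C1_on_def by blast
  have ck: "isCont k r" if "r > 0" for r using dk[of r] that by (auto intro: DERIV_isCont)
  have cK: "continuous_on {\<sigma>..\<sigma>'} (\<lambda>t. \<bar>K t\<bar>)"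
  proof (rule continuous_at_imp_continuous_on, intro ballI)
    fix t :: real
    have "isCont (\<lambda>t. k (exp t)) t" by (rule isCont_o2[OF _ ck]) auto
    thus "isCont (\<lambda>t. \<bar>K t\<bar>) t" unfolding K_def by (intro continuous_intros)
  qed
  obtain tk where tk: "\<forall>t\<in>{\<sigma>..\<sigma>'}. \<bar>K t\<bar> \<le> \<bar>K tk\<bar>"
    using continuous_attains_sup[OF compact_Icc _ cK] hsol(1) by force
  define B where "B = \<bar>K tk\<bar>"
  have B0: "B \<ge> 0" unfolding B_def by simp
  have Kpos: "K t > 0" for t unfolding K_def using hK(4)[of "exp t"] by simp
  have cfb: "isCont fbar v" for v using C1_isCont[OF hfbar(1)] .
  have cf: "isCont f v" for v using C1_isCont[OF hF(9)] .
  have fdp: "f dp = 0" using hF(8)[of dp] hF(7) by simp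
  have fdm: "f (- dm) = 0" using hF(8)[of "- dm"] hF(6) by simp
  have fbdp: "fbar dp = 0"
  proof -
    have l1: "(fbar \<longlongrightarrow> fbar dp) (at_left dp)"
      using cfb[of dp] unfolding isCont_def by (rule tendsto_mono[OF at_le[OF subset_UNIV]])
    have l2: "(f \<longlongrightarrow> f dp) (at_left dp)"
      using cf[of dp] unfolding isCont_def by (rule tendsto_mono[OF at_le[OF subset_UNIV]])
    have ev: "eventually (\<lambda>v. f v = fbar v) (at_left dp)"
      using eventually_at_left_real[of "- dm" dp] hF(3) hF(4)
      by (auto elim!: eventually_mono intro: hfbar(2)[symmetric])
    have "(fbar \<longlongrightarrow> f dp) (at_left dp)" by (rule Lim_transform_eventually[OF l2 ev])
    from tendsto_unique[OF trivial_limit_at_left_real l1 this] show ?thesis using fdp by simp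
  qed
  have fbdm: "fbar (- dm) = 0"
  proof -
    have l1: "(fbar \<longlongrightarrow> fbar (- dm)) (at_right (- dm))"
      using cfb[of "- dm"] unfolding isCont_def by (rule tendsto_mono[OF at_le[OF subset_UNIV]])
    have l2: "(f \<longlongrightarrow> f (- dm)) (at_right (- dm))"
      using cf[of "- dm"] unfolding isCont_def by (rule tendsto_mono[OF at_le[OF subset_UNIV]])
    have ev: "eventually (\<lambda>v. f v = fbar v) (at_right (- dm))"
      using eventually_at_right_real[of "- dm" dp] hF(3) hF(4)
      by (auto elim!: eventually_mono intro: hfbar(2)[symmetric])
    have "(fbar \<longlongrightarrow> f (- dm)) (at_right (- dm))" by (rule Lim_transform_eventually[OF l2 ev])
    from tendsto_unique[OF trivial_limit_at_right_real l1 this] show ?thesis using fdm by simp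
  qed
  obtain L1 where L1: "L1 \<ge> 0" "\<And>v. \<bar>v - dp\<bar> \<le> 1 \<Longrightarrow> \<bar>fbar v - fbar dp\<bar> \<le> L1 * \<bar>v - dp\<bar>"
    using C1_lip[OF hfbar(1), of dp] by blast
  obtain L2 where L2: "L2 \<ge> 0" "\<And>v. \<bar>v - (- dm)\<bar> \<le> 1 \<Longrightarrow> \<bar>fbar v - fbar (- dm)\<bar> \<le> L2 * \<bar>v - (- dm)\<bar>"
    using C1_lip[OF hfbar(1), of "- dm"] by blast
  have Kb: "\<bar>K t\<bar> \<le> B" if "\<sigma> < t" "t < \<sigma>'" for t using tk that B_def by auto
  have up: "\<forall>t\<in>{\<sigma>..\<sigma>'}. u t < dp"
  proof (rule core[where P="\<lambda>t. exp (- \<alpha> * t)" and A=A and \<delta>=1 and L="B * L1" and G=G and \<gamma>=\<gamma> and a=a])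
    show "\<sigma> < \<sigma>'" by (rule hsol(1))
    show "0 \<le> a" by (rule a0)
    show "continuous_on {\<sigma>..\<sigma>'} u" "continuous_on {\<sigma>..\<sigma>'} y" by (rule cu, rule cy)
    show "\<And>t. \<sigma> < t \<Longrightarrow> t < \<sigma>' \<Longrightarrow> (u has_real_derivative exp (- \<alpha> * t) * (y t * \<bar>y t\<bar> powr a)) (at t)" by (rule du)
    show "\<And>t. \<sigma> < t \<Longrightarrow> t < \<sigma>' \<Longrightarrow> (y has_real_derivative \<gamma> * y t - G t) (at t)" by (rule dy)
    show "\<And>t. \<sigma> < t \<Longrightarrow> t < \<sigma>' \<Longrightarrow> 0 < exp (- \<alpha> * t)" by simp
    show "\<And>t. \<sigma> < t \<Longrightarrow> t < \<sigma>' \<Longrightarrow> exp (- \<alpha> * t) \<le> A" by (rule PA)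
    show "(0::real) < 1" by simp
    show "u \<sigma> < dp" using hQ hsol(4) unfolding u_def by simp
    show "u \<sigma>' < dp" using hend unfolding u_def by simp
    fix t assume t: "\<sigma> < t" "t < \<sigma>'"
    {
      assume "dp \<le> u t"
      hence "u t * fbar (u t) \<le> 0" by (intro hfbar(4)) simp
      moreover have "u t > 0" using \<open>dp \<le> u t\<close> hF(4) by simp
      ultimately have "fbar (u t) \<le> 0" by (simp add: mult_le_0_iff)
      thus "G t \<le> 0" unfolding Gu using Kpos[of t] by (simp add: mult_nonneg_nonpos)
    }
    assume h: "dp - 1 \<le> u t" "u t \<le> dp"
    have "\<bar>fbar (u t)\<bar> \<le> L1 * (dp - u t)" using L1(2)[of "u t"] h fbdp by simp
    hence "\<bar>K t\<bar> * \<bar>fbar (u t)\<bar> \<le> B * (L1 * (dp - u t))"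
      using Kb[OF t] B0 by (intro mult_mono) auto
    thus "\<bar>G t\<bar> \<le> B * L1 * (dp - u t)" unfolding Gu by (simp add: abs_mult)
  qed
  have lo: "\<forall>t\<in>{\<sigma>..\<sigma>'}. (\<lambda>t. - u t) t < dm"
  proof (rule core[where P="\<lambda>t. exp (- \<alpha> * t)" and A=A and \<delta>=1 and L="B * L2" and G="\<lambda>t. - G t"
        and \<gamma>=\<gamma> and a=a and y="\<lambda>t. - y t"])
    show "\<sigma> < \<sigma>'" by (rule hsol(1))
    show "0 \<le> a" by (rule a0)
    show "continuous_on {\<sigma>..\<sigma>'} (\<lambda>t. - u t)" "continuous_on {\<sigma>..\<sigma>'} (\<lambda>t. - y t)"
      by (intro continuous_intros cu cy)+
    fix t assume t: "\<sigma> < t" "t < \<sigma>'"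
    show "((\<lambda>t. - u t) has_real_derivative exp (- \<alpha> * t) * (- y t * \<bar>- y t\<bar> powr a)) (at t)"
      using DERIV_minus[OF du[OF t]] by simp
    show "((\<lambda>t. - y t) has_real_derivative \<gamma> * - y t - - G t) (at t)"
      using DERIV_minus[OF dy[OF t]] by (simp add: algebra_simps)
    show "0 < exp (- \<alpha> * t)" by simp
    show "exp (- \<alpha> * t) \<le> A" by (rule PA[OF t])
    {
      assume "dm \<le> - u t"
      hence "u t * fbar (u t) \<le> 0" by (intro hfbar(4)) simp
      moreover have "u t < 0" using \<open>dm \<le> - u t\<close> hF(3) by simp
      ultimately have "fbar (u t) \<ge> 0" by (simp add: mult_le_0_iff)
      thus "- G t \<le> 0" unfolding Gu using Kpos[of t] by simp
    }
    assume h: "dm - 1 \<le> - u t" "- u t \<le> dm"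
    have "\<bar>fbar (u t)\<bar> \<le> L2 * (dm - - u t)" using L2(2)[of "u t"] h fbdm by (simp add: add.commute)
    hence "\<bar>K t\<bar> * \<bar>fbar (u t)\<bar> \<le> B * (L2 * (dm - - u t))"
      using Kb[OF t] B0 by (intro mult_mono) auto
    thus "\<bar>- G t\<bar> \<le> B * L2 * (dm - - u t)" unfolding Gu by (simp add: abs_mult)
  next
    show "- u \<sigma> < dm" using hQ hsol(4) unfolding u_def by simp
    show "- u \<sigma>' < dm" using hend unfolding u_def by simp
  qed (simp)
  show ?thesis
  proof
    fix t assume t: "t \<in> {\<sigma><..<\<sigma>'}"
    hence "t \<in> {\<sigma>..\<sigma>'}" by auto
    hence "u t < dp" "- u t < dm" using up lo by auto
    thus "- dm < x t * exp (- \<alpha> * t) \<and> x t * exp (- \<alpha> * t) < dp" unfolding u_def by linarith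
  qed
qed

end
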